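(* Let $N\geq 2$ and $n\geq 1$ be integers. For a map $u=(u_1,\dots,u_N)^\top\in C^\infty(\mathbb{R}^n)^N$, write $Du\otimes Du:D^2u$ for the $\mathbb{R}^N$-valued function whose $\alpha$-th component is \[ \sum_{i,j=1}^n\sum_{\beta=1}^N D_iu_\alpha\, D_ju_\beta\, D^2_{ij}u_\beta ,\qquad \alpha=1,\dots,N . \] Then there exist a map $u^3\in C^\infty(\mathbb{R}^n)^N$ with $Du^3\otimes Du^3:D^2u^3=0$ on $\mathbb{R}^n$ and an open set $\Omega\subseteq\mathbb{R}^n$ such that \[ \sup_{\Omega}|u^3|\;>\;\max_{\partial\Omega}|u^3| , \] i.e. the modulus $|u^3|$ does not satisfy the Maximum Principle.
   Context: $D_i=\partial/\partial x_i$, $D^2_{ij}=\partial^2/\partial x_i\partial x_j$, and $|\cdot|$ is the Euclidean norm on $\mathbb{R}^N$. *)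

theory Defs
  imports "HOL-Analysis.Analysis"
begin

definition partial :: "'n::finite \<Rightarrow> (real^'n \<Rightarrow> real) \<Rightarrow> real^'n \<Rightarrow> real" where
  "partial i f x = deriv (\<lambda>t. f (x + t *\<^sub>R axis i 1)) 0"

definition has_partial :: "'n::finite \<Rightarrow> (real^'n \<Rightarrow> real) \<Rightarrow> real^'n \<Rightarrow> bool" where
  "has_partial i f x \<longleftrightarrow> (\<lambda>t. f (x + t *\<^sub>R axis i 1)) differentiable (at 0)"

fun Ck :: "nat \<Rightarrow> (real^'n::finite \<Rightarrow> real) \<Rightarrow> bool" where
  "Ck 0 f \<longleftrightarrow> continuous_on UNIV f"
| "Ck (Suc k) f \<longleftrightarrow> continuous_on UNIV f \<and> (\<forall>i x. has_partial i f x) \<and> (\<forall>i. Ck k (partial i f))"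

definition Cinf :: "(real^'n::finite \<Rightarrow> real) \<Rightarrow> bool" where
  "Cinf f \<longleftrightarrow> (\<forall>k. Ck k f)"

end

theory Submission imports Defs begin

definition fS :: "('n::finite \<Rightarrow> real) \<Rightarrow> ('n \<Rightarrow> real) \<Rightarrow> real \<Rightarrow> real^'n \<Rightarrow> real" where
  "fS p q c y = c + (\<Sum>k\<in>UNIV. p k * cos (y$k) + q k * sin (y$k))"

lemma fS_deriv:
  "((\<lambda>t. fS p q c (x + t *\<^sub>R axis i 1)) has_real_derivative (- p i * sin (x$i) + q i * cos (x$i))) (at 0)"
proof -
  have eq: "(\<lambda>t. fS p q c (x + t *\<^sub>R axis i 1)) =
     (\<lambda>t. c + (\<Sum>k\<in>UNIV. p k * cos (x$k + (if k = i then t else 0)) + q k * sin (x$k + (if k = i then t else 0))))"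
    by (auto simp: fS_def axis_def intro!: ext sum.cong)
  have d: "\<And>k. ((\<lambda>t. p k * cos (x$k + (if k = i then t else 0)) + q k * sin (x$k + (if k = i then t else 0)))
      has_real_derivative (if k = i then - p i * sin (x$i) + q i * cos (x$i) else 0)) (at 0)"
  proof -
    fix k
    show "?thesis k"
    proof (cases "k = i")
      case True
      then show ?thesis by (auto intro!: derivative_eq_intros)
    next
      case False
      then show ?thesis by (auto intro!: derivative_eq_intros)
    qed
  qed
  have "((\<lambda>t. c + (\<Sum>k\<in>UNIV. p k * cos (x$k + (if k = i then t else 0)) + q k * sin (x$k + (if k = i then t else 0))))
     has_real_derivative (0 + (\<Sum>k\<in>UNIV. if k = i then - p i * sin (x$i) + q i * cos (x$i) else 0))) (at 0)"
    by (intro DERIV_add DERIV_const DERIV_sum d)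
  then show ?thesis unfolding eq by simp
qed

lemma fS_has_partial: "has_partial i (fS p q c) x"
  unfolding has_partial_def using fS_deriv real_differentiable_def
  by (metis differentiable_def has_field_derivative_imp_has_derivative)

lemma fS_partial: "partial i (fS p q c) = fS (\<lambda>k. if k = i then q i else 0) (\<lambda>k. if k = i then - p i else 0) 0"
proof
  fix x
  have "partial i (fS p q c) x = - p i * sin (x$i) + q i * cos (x$i)"
    unfolding partial_def by (rule DERIV_imp_deriv[OF fS_deriv])
  also have "\<dots> = fS (\<lambda>k. if k = i then q i else 0) (\<lambda>k. if k = i then - p i else 0) 0 x"
  proof -
    have "(\<Sum>k\<in>UNIV. (if k = i then q i else 0) * cos (x$k) + (if k = i then - p i else 0) * sin (x$k))
        = (\<Sum>k\<in>UNIV. if k = i then q i * cos (x$i) - p i * sin (x$i) else 0)"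
      by (rule sum.cong) auto
    then show ?thesis by (simp add: fS_def)
  qed
  finally show "partial i (fS p q c) x = fS (\<lambda>k. if k = i then q i else 0) (\<lambda>k. if k = i then - p i else 0) 0 x" .
qed

lemma fS_has_partial_all: "\<forall>i x. has_partial i (fS p q c) x"
  using fS_has_partial by blast

lemma fS_cont: "continuous_on UNIV (fS p q c)"
  unfolding fS_def by (intro continuous_intros)

lemma fS_Ck: "Ck k (fS p q c)"
  by (induction k arbitrary: p q c) (auto simp: fS_cont fS_partial intro: fS_has_partial)

lemma fS_Cinf: "Cinf (fS p q c)"
  by (simp add: Cinf_def fS_Ck)

lemma fS_partial_val: "partial i (fS p q c) x = - p i * sin (x$i) + q i * cos (x$i)"
  unfolding partial_def by (rule DERIV_imp_deriv[OF fS_deriv])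

lemma sum_cos_le: "(\<Sum>k\<in>UNIV. cos ((y::real^'n::finite)$k)) \<le> real CARD('n)"
proof -
  have "(\<Sum>k\<in>UNIV. cos (y$k)) \<le> (\<Sum>k\<in>(UNIV::'n set). 1)" by (rule sum_mono) simp
  then show ?thesis by simp
qed

lemma sum_cis_bound:
  "(\<Sum>k\<in>UNIV. cos ((y::real^'n::finite)$k))^2 + (\<Sum>k\<in>UNIV. sin (y$k))^2 \<le> (real CARD('n))^2"
proof -
  define z where "z = (\<Sum>k\<in>(UNIV::'n set). cis (y$k))"
  have "cmod z \<le> (\<Sum>k\<in>(UNIV::'n set). cmod (cis (y$k)))" unfolding z_def by (rule norm_sum)
  then have "cmod z \<le> real CARD('n)" by simp
  then have "(cmod z)^2 \<le> (real CARD('n))^2" by (intro power_mono) auto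
  moreover have "Re z = (\<Sum>k\<in>UNIV. cos (y$k))" "Im z = (\<Sum>k\<in>UNIV. sin (y$k))"
    unfolding z_def by simp_all
  ultimately show ?thesis by (simp add: cmod_power2)
qed

lemma sum_cos_less:
  assumes "norm (y::real^'n::finite) = 1"
  shows "(\<Sum>k\<in>UNIV. cos (y$k)) < real CARD('n)"
proof -
  have "y \<noteq> 0" using assms by auto
  then obtain k where k: "y$k \<noteq> 0" by (auto simp: vec_eq_iff)
  have yk: "\<bar>y$k\<bar> \<le> 1" using component_le_norm_cart[of y k] assms by simp
  have "cos (y$k) \<noteq> 1"
  proof
    assume "cos (y$k) = 1"
    then obtain m :: int where m: "y$k = m * 2 * pi" by (auto simp: cos_one_2pi_int)
    with k have "m \<noteq> 0" by auto
    then have "\<bar>real_of_int m\<bar> \<ge> 1" by linarith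
    then have "\<bar>y$k\<bar> \<ge> 2 * pi" using m pi_gt_zero by (simp add: abs_mult)
    with yk pi_gt3 show False by linarith
  qed
  then have "cos (y$k) < 1" using cos_le_one[of "y$k"] by linarith
  then have "(\<Sum>k\<in>UNIV. cos (y$k)) < (\<Sum>k\<in>(UNIV::'n set). 1)"
    by (intro sum_strict_mono_ex1) auto
  then show ?thesis by simp
qed

theorem mainTheorem2:
  assumes "CARD('N::finite) \<ge> 2"
  shows "\<exists>(u :: real^'n::finite \<Rightarrow> real^'N) (\<Omega> :: (real^'n) set).
           (\<forall>\<alpha>. Cinf (\<lambda>y. u y $ \<alpha>)) \<and>
           (\<forall>x \<alpha>. (\<Sum>i\<in>UNIV. \<Sum>j\<in>UNIV. \<Sum>\<beta>\<in>UNIV.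
                partial i (\<lambda>y. u y $ \<alpha>) x * partial j (\<lambda>y. u y $ \<beta>) x
                * partial i (partial j (\<lambda>y. u y $ \<beta>)) x) = 0) \<and>
           open \<Omega> \<and> bounded \<Omega> \<and> frontier \<Omega> \<noteq> {} \<and>
           (SUP y\<in>frontier \<Omega>. norm (u y)) < (SUP x\<in>\<Omega>. norm (u x))"
proof -
  obtain a b :: 'N where ab: "a \<noteq> b"
  proof -
    have "\<not> (\<forall>a b::'N. a = b)"
    proof
      assume "\<forall>a b::'N. a = b"
      then have "card (UNIV::'N set) \<le> 1" by (simp add: card_le_Suc0_iff_eq)
      with assms show False by simp
    qed
    then show ?thesis using that by blast
  qed
  define P :: "'N \<Rightarrow> 'n \<Rightarrow> real" where "P \<beta> k = (if \<beta> = a then 1 else 0)" for \<beta> k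
  define Q :: "'N \<Rightarrow> 'n \<Rightarrow> real" where "Q \<beta> k = (if \<beta> = b then 1 else 0)" for \<beta> k
  define C :: "'N \<Rightarrow> real" where "C \<beta> = (if \<beta> = a then 1 else 0)" for \<beta>
  define u :: "real^'n \<Rightarrow> real^'N" where "u y = (\<chi> \<beta>. fS (P \<beta>) (Q \<beta>) (C \<beta>) y)" for y
  have ucomp: "(\<lambda>y. u y $ \<beta>) = fS (P \<beta>) (Q \<beta>) (C \<beta>)" for \<beta>
    by (simp add: u_def)
  have cinf: "\<forall>\<alpha>. Cinf (\<lambda>y. u y $ \<alpha>)" by (simp add: ucomp fS_Cinf)
  have pde: "(\<Sum>i\<in>UNIV. \<Sum>j\<in>UNIV. \<Sum>\<beta>\<in>UNIV.
                partial i (\<lambda>y. u y $ \<alpha>) x * partial j (\<lambda>y. u y $ \<beta>) x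
                * partial i (partial j (\<lambda>y. u y $ \<beta>)) x) = 0" for x \<alpha>
  proof -
    have "(\<Sum>\<beta>\<in>UNIV. partial i (\<lambda>y. u y $ \<alpha>) x * partial j (\<lambda>y. u y $ \<beta>) x
                * partial i (partial j (\<lambda>y. u y $ \<beta>)) x) = 0" for i j
    proof -
      have d1: "partial i (\<lambda>y. u y $ \<gamma>) x = Q \<gamma> i * cos (x$i) - P \<gamma> i * sin (x$i)" for i \<gamma>
        by (simp add: ucomp fS_partial_val)
      have d2: "partial i (partial j (\<lambda>y. u y $ \<gamma>)) x =
          (if i = j then - Q \<gamma> j * sin (x$i) - P \<gamma> j * cos (x$i) else 0)" for \<gamma>
      proof -
        have "partial j (\<lambda>y. u y $ \<gamma>) = fS (\<lambda>k. if k = j then Q \<gamma> j else 0) (\<lambda>k. if k = j then - P \<gamma> j else 0) 0"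
          by (simp add: ucomp fS_partial)
        then show ?thesis by (simp only: fS_partial_val) simp
      qed
      have "(\<Sum>\<beta>\<in>UNIV. partial j (\<lambda>y. u y $ \<beta>) x * partial i (partial j (\<lambda>y. u y $ \<beta>)) x)
         = (\<Sum>\<beta>\<in>UNIV. (if \<beta> = a then (if i = j then sin (x$j) * cos (x$i) else 0) else 0)
              + (if \<beta> = b then (if i = j then - cos (x$j) * sin (x$i) else 0) else 0))"
        using ab by (intro sum.cong) (auto simp: d1 d2 P_def Q_def)
      also have "\<dots> = 0" by (simp add: sum.distrib)
      finally show ?thesis by (simp add: sum_distrib_left[symmetric] mult.assoc)
    qed
    then show ?thesis by simp
  qed
  define A where "A y = 1 + (\<Sum>k\<in>UNIV. cos ((y::real^'n)$k))" for y
  define B where "B y = (\<Sum>k\<in>UNIV. sin ((y::real^'n)$k))" for y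
  have ucomp2: "u y $ \<beta> = (if \<beta> = a then A y else if \<beta> = b then B y else 0)" for y \<beta>
    using ab by (auto simp: u_def fS_def P_def Q_def C_def A_def B_def)
  have nsq: "(norm (u y))^2 = (A y)^2 + (B y)^2" for y
  proof -
    have "(norm (u y))^2 = (\<Sum>\<beta>\<in>UNIV. (u y $ \<beta>)^2)"
      by (simp add: norm_vec_def L2_set_def sum_nonneg)
    also have "\<dots> = (\<Sum>\<beta>\<in>UNIV. (if \<beta> = a then (A y)^2 else 0) + (if \<beta> = b then (B y)^2 else 0))"
      using ab by (intro sum.cong) (auto simp: ucomp2)
    also have "\<dots> = (A y)^2 + (B y)^2" by (simp add: sum.distrib)
    finally show ?thesis .
  qed
  let ?n = "real CARD('n)"
  have nsq2: "(norm (u y))^2 \<le> 1 + 2 * (\<Sum>k\<in>UNIV. cos (y$k)) + ?n^2" for y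
    using sum_cis_bound[of y] unfolding nsq A_def B_def by (simp add: power2_eq_square algebra_simps)
  have ubound: "norm (u y) \<le> 1 + ?n" for y
  proof -
    have "(norm (u y))^2 \<le> (1 + ?n)^2"
      using nsq2[of y] sum_cos_le[of y] by (simp add: power2_eq_square algebra_simps)
    then show ?thesis using power2_le_imp_le by (metis add_nonneg_nonneg of_nat_0_le_iff zero_le_one)
  qed
  have ustrict: "norm (u y) < 1 + ?n" if "norm y = 1" for y
  proof -
    have "(norm (u y))^2 < (1 + ?n)^2"
      using nsq2[of y] sum_cos_less[OF that] by (simp add: power2_eq_square algebra_simps)
    then show ?thesis using power2_less_imp_less by (metis add_nonneg_nonneg of_nat_0_le_iff zero_le_one)
  qed
  have u0: "norm (u 0) = 1 + ?n"
  proof -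
    have "(norm (u 0))^2 = (1 + ?n)^2" by (simp add: nsq A_def B_def)
    then show ?thesis by (metis add_nonneg_nonneg norm_ge_zero of_nat_0_le_iff power2_eq_iff_nonneg zero_le_one)
  qed
  have ucont: "continuous_on UNIV u"
    unfolding u_def by (intro continuous_on_vec_lambda fS_cont)
  have fr: "frontier (ball (0::real^'n) 1) = sphere 0 1" by simp
  have sne: "sphere (0::real^'n) 1 \<noteq> {}" by simp
  obtain y0 where y0: "y0 \<in> sphere (0::real^'n) 1" "\<And>z. z \<in> sphere 0 1 \<Longrightarrow> norm (u z) \<le> norm (u y0)"
    using continuous_attains_sup[OF compact_sphere sne, of "\<lambda>y. norm (u y)"]
      continuous_on_norm[OF continuous_on_subset[OF ucont]] by blast
  have "(SUP y\<in>frontier (ball 0 1). norm (u y)) \<le> norm (u y0)"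
    unfolding fr by (rule cSUP_least[OF sne y0(2)])
  also have "\<dots> < 1 + ?n" using ustrict y0(1) by simp
  also have "\<dots> \<le> (SUP x\<in>ball 0 1. norm (u x))"
    unfolding u0[symmetric] by (rule cSUP_upper) (auto intro!: bdd_aboveI2[OF ubound])
  finally have ineq: "(SUP y\<in>frontier (ball 0 1). norm (u y)) < (SUP x\<in>ball 0 1. norm (u x))" .
  show ?thesis
    by (rule exI[of _ u], rule exI[of _ "ball 0 1"]) (use cinf pde ineq sne in simp)
qed
end
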